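(* Let $G$ be a graph with $n$ vertices, $m\geq 1$ edges and $t(G)$ triangles. Then \[ \mu_n(G)\leq \frac{3n^3\,t(G)-4m^3}{nm(n^2-2m)}, \] with equality if and only if $G$ is a regular complete multipartite graph, i.e. a complete $k$-partite graph for some $k\geq 2$ with all $k$ parts of equal size.
   Context: All graphs are finite, simple and undirected. $t(G)$ is the number of triangles in $G$. For a graph $G$ of order $n$, the eigenvalues of its adjacency matrix $A(G)$ are $\mu_1(G)\geq\dots\geq\mu_n(G)$; $\mu_n(G)$ is the smallest adjacency eigenvalue. *)

theory Defs
  imports "Jordan_Normal_Form.Char_Poly"
begin

definition simple_graph :: "nat \<Rightarrow> nat set set \<Rightarrow> bool" where
  "simple_graph n Eg \<longleftrightarrow> (\<forall>e\<in>Eg. e \<subseteq> {0..<n} \<and> card e = 2)"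

definition adj_matrix :: "nat \<Rightarrow> nat set set \<Rightarrow> real mat" where
  "adj_matrix n Eg = mat n n (\<lambda>(i, j). if {i, j} \<in> Eg then 1 else 0)"

text \<open>Smallest adjacency eigenvalue (the adjacency matrix is real symmetric,
  so all its eigenvalues are real).\<close>
definition min_eigenvalue :: "nat \<Rightarrow> nat set set \<Rightarrow> real" where
  "min_eigenvalue n Eg = Min {\<mu>. eigenvalue (adj_matrix n Eg) \<mu>}"

definition num_triangles :: "nat \<Rightarrow> nat set set \<Rightarrow> nat" where
  "num_triangles n Eg = card {T. T \<subseteq> {0..<n} \<and> card T = 3 \<and>
      (\<forall>x\<in>T. \<forall>y\<in>T. x \<noteq> y \<longrightarrow> {x, y} \<in> Eg)}"

definition regular_complete_multipartite :: "nat \<Rightarrow> nat set set \<Rightarrow> bool" where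
  "regular_complete_multipartite n Eg \<longleftrightarrow>
     (\<exists>k s (c::nat \<Rightarrow> nat). k \<ge> 2 \<and> s \<ge> 1 \<and> (\<forall>x<n. c x < k) \<and>
        (\<forall>i<k. card {x. x < n \<and> c x = i} = s) \<and>
        (\<forall>x<n. \<forall>y<n. x \<noteq> y \<longrightarrow> ({x, y} \<in> Eg \<longleftrightarrow> c x \<noteq> c y)))"

end

theory Submission
  imports Defs "HOL-Analysis.Analysis"
begin



lemma sum_if_outer: fixes n :: nat shows "(\<Sum>k<n. \<Sum>j<n. if k = i then f j else (0::real)) = (if i < n then (\<Sum>j<n. f j) else 0)"
proof -
  have "(\<Sum>k<n. \<Sum>j<n. if k = i then f j else (0::real)) = (\<Sum>k<n. if k = i then (\<Sum>j<n. f j) else 0)"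
    by (intro sum.cong) auto
  also have "\<dots> = (if i < n then (\<Sum>j<n. f j) else 0)" by (simp add: sum.delta)
  finally show ?thesis .
qed

lemma sum_if_inner: fixes n :: nat shows "(\<Sum>k<n. \<Sum>j<n. if j = i then f k else (0::real)) = (if i < n then (\<Sum>k<n. f k) else 0)"
proof -
  have "(\<Sum>k<n. \<Sum>j<n. if j = i then f k else (0::real)) = (\<Sum>k<n. if i < n then f k else 0)"
    by (intro sum.cong refl) (simp add: sum.delta)
  thus ?thesis by simp
qed

lemma quad_expand:
  fixes b :: "nat \<Rightarrow> nat \<Rightarrow> real"
  assumes i: "i < n"
  shows "(\<Sum>k<n. \<Sum>j<n. b k j * (v k + (if k = i then t else 0)) * (v j + (if j = i then t else 0)))
     = (\<Sum>k<n. \<Sum>j<n. b k j * v k * v j) + t * (\<Sum>j<n. b i j * v j) + t * (\<Sum>k<n. b k i * v k) + t^2 * b i i"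
proof -
  have "(\<Sum>k<n. \<Sum>j<n. b k j * (v k + (if k = i then t else 0)) * (v j + (if j = i then t else 0)))
     = (\<Sum>k<n. \<Sum>j<n. b k j * v k * v j) + (\<Sum>k<n. \<Sum>j<n. (if k = i then t * (b i j * v j) else 0)) 
        + (\<Sum>k<n. \<Sum>j<n. (if j = i then t * (b k i * v k) else 0))
          + (\<Sum>k<n. \<Sum>j<n. (if k = i then (if j = i then t^2 * b i i else 0) else 0))"
    unfolding sum.distrib[symmetric]
    by (intro sum.cong refl) (auto simp: algebra_simps power2_eq_square)
  also have "\<dots> = (\<Sum>k<n. \<Sum>j<n. b k j * v k * v j) + t * (\<Sum>j<n. b i j * v j) + t * (\<Sum>k<n. b k i * v k) + t^2 * b i i"
    using i unfolding sum_if_outer sum_if_inner by (simp add: sum_distrib_left sum.delta)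
  finally show ?thesis .
qed

lemma psd_kernel:
  fixes b :: "nat \<Rightarrow> nat \<Rightarrow> real"
  assumes sym: "\<And>i j. b i j = b j i"
  and psd: "\<And>x. 0 \<le> (\<Sum>i<n. \<Sum>j<n. b i j * x i * x j)"
  and v0: "(\<Sum>i<n. \<Sum>j<n. b i j * v i * v j) = 0"
  and i: "i < n"
  shows "(\<Sum>j<n. b i j * v j) = 0"
proof -
  define w where "w = (\<Sum>j<n. b i j * v j)"
  define c where "c = b i i"
  have w2: "(\<Sum>k<n. b k i * v k) = w" unfolding w_def by (simp add: sym)
  have Q: "0 \<le> 2 * t * w + t^2 * c" for t
  proof -
    have "0 \<le> (\<Sum>k<n. \<Sum>j<n. b k j * (v k + (if k = i then t else 0)) * (v j + (if j = i then t else 0)))"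
      by (rule psd)
    also have "\<dots> = 2 * t * w + t^2 * c" unfolding quad_expand[OF i] v0 w2 w_def[symmetric] c_def by simp
    finally show ?thesis .
  qed
  have c0: "0 \<le> c"
  proof -
    have "0 \<le> (\<Sum>k<n. \<Sum>j<n. b k j * (0 + (if k = i then 1 else 0)) * (0 + (if j = i then 1 else 0)))"
      by (rule psd)
    also have "\<dots> = c" unfolding quad_expand[OF i] c_def by simp
    finally show ?thesis .
  qed
  define t where "t = - w / (c + 1)"
  have "0 \<le> 2 * t * w + t^2 * c" by (rule Q)
  hence "0 \<le> (2 * t * w + t^2 * c) * (c+1)^2" using c0 by simp
  also have "(2 * t * w + t^2 * c) * (c+1)^2 = -(w^2) * (c + 2)"
  proof -
    have cp: "c + 1 \<noteq> 0" using c0 by simp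
    have tc: "t * (c + 1) = - w" unfolding t_def using cp by simp
    have "(2 * t * w + t^2 * c) * (c+1)^2 = 2 * w * (c + 1) * (t * (c+1)) + c * (t * (c+1))^2"
      by (simp add: algebra_simps power2_eq_square)
    also have "\<dots> = -(w^2) * (c + 2)" unfolding tc by (simp add: algebra_simps power2_eq_square)
    finally show ?thesis .
  qed
  finally have "0 \<le> -(w^2) * (c + 2)" .
  hence "w^2 * (c+2) \<le> 0" by linarith
  moreover have "c + 2 > 0" using c0 by simp
  ultimately have "w^2 \<le> 0" by (simp add: mult_le_0_iff)
  thus ?thesis unfolding w_def[symmetric] by simp
qed



lemma rayleigh_min:
  fixes a :: "nat \<Rightarrow> nat \<Rightarrow> real" and n :: nat
  assumes n: "0 < n"
  shows "\<exists>v. (\<Sum>i<n. (v i)^2) = 1 \<and> (\<forall>x. (\<Sum>i<n. (x i)^2) = 1 \<longrightarrow>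
            (\<Sum>i<n. \<Sum>j<n. a i j * v i * v j) \<le> (\<Sum>i<n. \<Sum>j<n. a i j * x i * x j))"
proof -
  define X where "X = product_topology (\<lambda>_. euclideanreal) {..<n}"
  define Q where "Q = (\<lambda>x::nat\<Rightarrow>real. (\<Sum>i<n. \<Sum>j<n. a i j * x i * x j))"
  define N where "N = (\<lambda>x::nat\<Rightarrow>real. (\<Sum>i<n. (x i)^2))"
  have proj: "continuous_map X euclideanreal (\<lambda>x. x i)" if "i < n" for i
    unfolding X_def using that by (intro continuous_map_product_projection) auto
  have cQ: "continuous_map X euclideanreal Q"
    unfolding Q_def
    by (intro continuous_map_sum continuous_map_real_mult continuous_map_real_mult_left proj) auto
  have cN: "continuous_map X euclideanreal N"
    unfolding N_def power2_eq_square
    by (intro continuous_map_sum continuous_map_real_mult proj) auto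
  define K where "K = PiE {..<n} (\<lambda>_. {-1..1::real})"
  have cK: "compactin X K" unfolding X_def K_def
    by (subst compactin_PiE) (auto simp: compactin_euclidean_iff)
  define C where "C = {x \<in> topspace X. N x \<in> {1}}"
  have clC: "closedin X C" unfolding C_def
    by (rule closedin_continuous_map_preimage[OF cN]) auto
  define S where "S = C \<inter> K"
  have cS: "compactin X S" unfolding S_def by (rule closed_Int_compactin[OF clC cK])
  have "compactin euclideanreal (Q ` S)" by (rule image_compactin[OF cS cQ])
  hence cQS: "compact (Q ` S)" by (simp add: compactin_euclidean_iff)
  have topX: "topspace X = PiE {..<n} (\<lambda>_. UNIV)" unfolding X_def by simp
  define e0 where "e0 = restrict (\<lambda>i::nat. if i = 0 then 1 else (0::real)) {..<n}"
  have "N e0 = (\<Sum>i<n. if i = 0 then 1 else 0)" unfolding N_def e0_def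
    by (intro sum.cong) auto
  hence "N e0 = 1" using n by simp
  moreover have "e0 \<in> K" unfolding K_def e0_def by (auto simp: restrict_PiE_iff)
  moreover have "e0 \<in> topspace X" unfolding topX e0_def by (auto simp: restrict_PiE_iff)
  ultimately have "e0 \<in> S" unfolding S_def C_def by auto
  hence ne: "Q ` S \<noteq> {}" by auto
  from compact_attains_inf[OF cQS ne] obtain q where q: "q \<in> Q ` S" "\<forall>y\<in>Q ` S. q \<le> y" by blast
  then obtain v where v: "v \<in> S" "Q v = q" by auto
  have Nv: "N v = 1" using v(1) unfolding S_def C_def by auto
  show ?thesis
  proof (intro exI[of _ v] conjI allI impI)
    show "(\<Sum>i<n. (v i)^2) = 1" using Nv unfolding N_def .
    fix x :: "nat \<Rightarrow> real" assume x: "(\<Sum>i<n. (x i)^2) = 1"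
    define x' where "x' = restrict x {..<n}"
    have xi: "(x i)^2 \<le> 1" if "i < n" for i
    proof -
      have "(x i)^2 \<le> (\<Sum>i<n. (x i)^2)"
        by (rule member_le_sum) (use that in auto)
      thus ?thesis using x by simp
    qed
    have "\<bar>x i\<bar> \<le> 1" if "i < n" for i using xi[OF that]
      by (metis abs_le_square_iff abs_one one_power2)
    hence "x' \<in> K" unfolding K_def x'_def by (auto simp: abs_le_iff)
    moreover have "x' \<in> topspace X" unfolding topX x'_def by auto
    moreover have "N x' = 1" unfolding N_def x'_def using x by simp
    ultimately have "x' \<in> S" unfolding S_def C_def by auto
    hence "q \<le> Q x'" using q by auto
    also have "Q x' = Q x" unfolding Q_def x'_def by simp
    finally show "(\<Sum>i<n. \<Sum>j<n. a i j * v i * v j) \<le> (\<Sum>i<n. \<Sum>j<n. a i j * x i * x j)"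
      using v(2) unfolding Q_def by simp
  qed
qed



locale symA =
  fixes n :: nat and a :: "nat \<Rightarrow> nat \<Rightarrow> real"
  assumes sym: "\<And>i j. a i j = a j i"
    and idem: "\<And>i j. a i j * a i j = a i j"
    and npos: "0 < n"
begin

definition "d i = (\<Sum>j<n. a i j)"
definition "M = (\<Sum>i<n. d i)"
definition "D2 = (\<Sum>i<n. (d i)^2)"
definition "W = (\<Sum>i<n. \<Sum>k<n. a i k * d i * d k)"
definition "T3 = (\<Sum>i<n. \<Sum>j<n. \<Sum>k<n. a i j * a i k * a j k)"
definition "Qb mu x = (\<Sum>i<n. \<Sum>k<n. (a i k - (if i = k then mu else 0)) * x i * x k)"
definition "y j i = a i j - d i / n"
definition "e i = d i - M / n"

lemma L1: "Qb mu x = (\<Sum>i<n. \<Sum>k<n. a i k * x i * x k) - mu * (\<Sum>i<n. (x i)^2)"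
proof -
  have "Qb mu x = (\<Sum>i<n. \<Sum>k<n. a i k * x i * x k) - (\<Sum>i<n. \<Sum>k<n. (if i = k then mu * x i * x k else 0))"
    unfolding Qb_def sum_subtractf[symmetric] by (intro sum.cong refl) (auto simp: algebra_simps)
  also have "(\<Sum>i<n. \<Sum>k<n. (if i = k then mu * x i * x k else 0)) = mu * (\<Sum>i<n. (x i)^2)"
    by (simp add: sum_distrib_left power2_eq_square mult.assoc)
  finally show ?thesis .
qed

lemma L2pt: "(\<Sum>j<n. a i k * y j i * y j k) = a i k * (\<Sum>j<n. a i j * a k j) - a i k * d i * d k / n"
proof -
  have "(\<Sum>j<n. a i k * y j i * y j k) = (\<Sum>j<n. a i k * a i j * a k j) - (a i k * d k / n) * (\<Sum>j<n. a i j)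
     - (a i k * d i / n) * (\<Sum>j<n. a k j) + (\<Sum>j<n. a i k * d i * d k / n^2)"
    unfolding y_def sum_distrib_left sum_subtractf[symmetric] sum.distrib[symmetric]
    using npos by (intro sum.cong refl) (simp add: field_simps power2_eq_square)
  also have "\<dots> = a i k * (\<Sum>j<n. a i j * a k j) - a i k * d i * d k / n"
    using npos unfolding d_def[symmetric] by (simp add: sum_distrib_left power2_eq_square field_simps mult.assoc)
  finally show ?thesis .
qed

lemma L2: "(\<Sum>j<n. \<Sum>i<n. \<Sum>k<n. a i k * y j i * y j k) = T3 - W / n"
proof -
  have "(\<Sum>j<n. \<Sum>i<n. \<Sum>k<n. a i k * y j i * y j k) = (\<Sum>i<n. \<Sum>k<n. \<Sum>j<n. a i k * y j i * y j k)"
    by (subst sum.swap) (subst (2) sum.swap, rule refl)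
  also have "\<dots> = (\<Sum>i<n. \<Sum>k<n. a i k * (\<Sum>j<n. a i j * a k j)) - (\<Sum>i<n. \<Sum>k<n. a i k * d i * d k) / n"
    unfolding L2pt by (simp add: sum_subtractf sum_divide_distrib)
  also have "(\<Sum>i<n. \<Sum>k<n. a i k * (\<Sum>j<n. a i j * a k j)) = T3"
    unfolding T3_def sum_distrib_left
    by (simp add: mult.assoc)
  finally show ?thesis unfolding W_def .
qed

lemma L3: "(\<Sum>j<n. \<Sum>i<n. (y j i)^2) = M - D2 / n"
proof -
  have "(\<Sum>j<n. \<Sum>i<n. (y j i)^2) = (\<Sum>i<n. \<Sum>j<n. (y j i)^2)" by (rule sum.swap)
  also have "\<dots> = (\<Sum>i<n. d i - (d i)^2 / n)"
  proof (intro sum.cong refl)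
    fix i
    have "(\<Sum>j<n. (y j i)^2) = (\<Sum>j<n. a i j) - 2 * d i / n * (\<Sum>j<n. a i j) + (\<Sum>j<n. (d i)^2 / n^2)"
      unfolding y_def sum_distrib_left sum_subtractf[symmetric] sum.distrib[symmetric]
      by (intro sum.cong refl) (simp add: algebra_simps power2_eq_square idem)
    also have "\<dots> = d i - (d i)^2 / n"
      using npos unfolding d_def[symmetric] by (simp add: power2_eq_square field_simps)
    finally show "(\<Sum>j<n. (y j i)^2) = d i - (d i)^2 / n" .
  qed
  also have "\<dots> = M - D2 / n" unfolding M_def D2_def by (simp add: sum_subtractf sum_divide_distrib)
  finally show ?thesis .
qed

lemma dsym: "(\<Sum>i<n. a i k * d i) = (\<Sum>i<n. a k i * d i)" by (simp add: sym)

lemma L4: "(\<Sum>i<n. \<Sum>k<n. a i k * e i * e k) = W - 2 * (M / n) * D2 + (M / n)^2 * M"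
proof -
  define c where "c = M / n"
  have "(\<Sum>i<n. \<Sum>k<n. a i k * e i * e k) = (\<Sum>i<n. \<Sum>k<n. a i k * d i * d k) - c * (\<Sum>i<n. \<Sum>k<n. a i k * d i)
       - c * (\<Sum>i<n. \<Sum>k<n. a i k * d k) + c^2 * (\<Sum>i<n. \<Sum>k<n. a i k)"
    unfolding e_def c_def[symmetric] sum_distrib_left sum_subtractf[symmetric] sum.distrib[symmetric]
    by (intro sum.cong refl) (simp add: algebra_simps power2_eq_square)
  also have "(\<Sum>i<n. \<Sum>k<n. a i k * d i) = D2"
    unfolding D2_def power2_eq_square by (simp add: sum_distrib_right[symmetric] d_def mult.commute)
  also have "(\<Sum>i<n. \<Sum>k<n. a i k * d k) = D2"
    unfolding D2_def power2_eq_square 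
    by (subst sum.swap) (simp add: sum_distrib_right[symmetric] d_def sym mult.commute)
  also have "(\<Sum>i<n. \<Sum>k<n. a i k) = M" unfolding M_def d_def ..
  finally show ?thesis unfolding W_def c_def by simp
qed

lemma L5: "(\<Sum>i<n. (e i)^2) = D2 - M^2 / n"
proof -
  have "(\<Sum>i<n. (e i)^2) = D2 - 2 * (M / n) * M + (\<Sum>i<n. (M/n)^2)"
    unfolding e_def D2_def M_def sum_distrib_left sum_subtractf[symmetric] sum.distrib[symmetric]
    by (intro sum.cong refl) (simp add: algebra_simps power2_eq_square)
  thus ?thesis using npos by (simp add: power2_eq_square field_simps)
qed

lemma main_identity:
  "T3 - mu * (M - M^2 / n^2) - M^3 / n^3 =
     (\<Sum>j<n. Qb mu (y j)) + Qb mu e / n + (2 * M / n^2) * (\<Sum>i<n. (e i)^2)"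
proof -
  have S1: "(\<Sum>j<n. Qb mu (y j)) = T3 - W / n - mu * (M - D2 / n)"
    unfolding L1 sum_subtractf sum_distrib_left[symmetric] L2 L3 ..
  have S2: "Qb mu e = W - 2 * (M / n) * D2 + (M / n)^2 * M - mu * (D2 - M^2 / n)"
    unfolding L1 L4 L5 ..
  show ?thesis unfolding S1 S2 L5 using npos
    by (simp add: field_simps power2_eq_square power3_eq_cube)
qed

end



definition aa :: "nat set set \<Rightarrow> nat \<Rightarrow> nat \<Rightarrow> real" where
  "aa E i j = (if {i, j} \<in> E then 1 else 0)"

lemma card_group:
  assumes "finite S" "finite T" "g ` S \<subseteq> T" "\<And>t. t \<in> T \<Longrightarrow> card {x \<in> S. g x = t} = c"
  shows "card S = c * card T"
proof -
  have "card S = (\<Sum>t\<in>T. \<Sum>x\<in>{x \<in> S. g x = t}. 1)"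
    using sum.group[OF assms(1,2,3), of "\<lambda>_. 1::nat"] by simp
  also have "\<dots> = (\<Sum>t\<in>T. c)" using assms(4) by (intro sum.cong) auto
  finally show ?thesis by simp
qed

lemma sum_indicator_card:
  "finite S \<Longrightarrow> (\<Sum>x\<in>S. if P x then 1 else 0) = real (card {x\<in>S. P x})"
proof -
  assume "finite S"
  moreover have "S \<inter> Collect P = {x\<in>S. P x}" by auto
  ultimately show ?thesis by (simp add: sum.If_cases)
qed

context
  fixes n :: nat and E :: "nat set set"
  assumes sg: "simple_graph n E"
begin

lemma finE: "finite E"
proof -
  have "E \<subseteq> Pow {0..<n}" using sg unfolding simple_graph_def by auto
  thus ?thesis by (rule finite_subset) auto
qed

lemma edge_ne: "{i, j} \<in> E \<Longrightarrow> i \<noteq> j"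
  using sg unfolding simple_graph_def by fastforce

lemma edge_lt: "{i, j} \<in> E \<Longrightarrow> i < n \<and> j < n"
  using sg unfolding simple_graph_def by fastforce

lemma comb1: "(\<Sum>i<n. \<Sum>j<n. aa E i j) = 2 * real (card E)"
proof -
  define P where "P = {p \<in> {..<n} \<times> {..<n}. {fst p, snd p} \<in> E}"
  have "(\<Sum>i<n. \<Sum>j<n. aa E i j) = (\<Sum>p\<in>{..<n} \<times> {..<n}. if {fst p, snd p} \<in> E then 1 else 0)"
    unfolding aa_def sum.cartesian_product by (simp add: case_prod_beta)
  also have "\<dots> = real (card P)" unfolding P_def by (rule sum_indicator_card) auto
  also have "card P = 2 * card E"
  proof (rule card_group[where g = "\<lambda>p. {fst p, snd p}"])
    show "finite P" unfolding P_def by auto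
    show "finite E" by (rule finE)
    show "(\<lambda>p. {fst p, snd p}) ` P \<subseteq> E" unfolding P_def by auto
    fix e assume e: "e \<in> E"
    then obtain u v where uv: "e = {u, v}" "u \<noteq> v" using sg unfolding simple_graph_def
      by (auto simp: card_2_iff)
    have "u < n" "v < n" using edge_lt e uv by auto
    have "{p \<in> P. {fst p, snd p} = e} = {(u, v), (v, u)}"
    proof (rule Set.set_eqI)
      fix p :: "nat \<times> nat"
      obtain i j where p: "p = (i, j)" by (cases p) auto
      have "(p \<in> P \<and> {fst p, snd p} = e) \<longleftrightarrow> ({i, j} = {u, v})"
        unfolding P_def p uv(1)[symmetric] using e edge_lt[of i j] by auto
      also have "\<dots> \<longleftrightarrow> p \<in> {(u, v), (v, u)}" unfolding p doubleton_eq_iff by auto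
      finally show "p \<in> {p \<in> P. {fst p, snd p} = e} \<longleftrightarrow> p \<in> {(u, v), (v, u)}" by simp
    qed
    thus "card {p \<in> P. {fst p, snd p} = e} = 2" using uv by simp
  qed
  finally show ?thesis by simp
qed

lemma comb2: "(\<Sum>i<n. \<Sum>j<n. \<Sum>k<n. aa E i j * aa E i k * aa E j k) = 6 * real (num_triangles n E)"
proof -
  define P where "P = {p \<in> {..<n} \<times> {..<n} \<times> {..<n}. {fst p, fst (snd p)} \<in> E \<and> {fst p, snd (snd p)} \<in> E \<and> {fst (snd p), snd (snd p)} \<in> E}"
  define Tr where "Tr = {T. T \<subseteq> {0..<n} \<and> card T = 3 \<and> (\<forall>x\<in>T. \<forall>y\<in>T. x \<noteq> y \<longrightarrow> {x, y} \<in> E)}"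
  have "(\<Sum>i<n. \<Sum>j<n. \<Sum>k<n. aa E i j * aa E i k * aa E j k) =
     (\<Sum>p\<in>{..<n} \<times> {..<n} \<times> {..<n}. if {fst p, fst (snd p)} \<in> E \<and> {fst p, snd (snd p)} \<in> E \<and> {fst (snd p), snd (snd p)} \<in> E then 1 else 0)"
    unfolding aa_def sum.cartesian_product by (intro sum.cong refl) (auto simp: case_prod_beta)
  also have "\<dots> = real (card P)" unfolding P_def by (rule sum_indicator_card) auto
  also have "card P = 6 * card Tr"
  proof (rule card_group[where g = "\<lambda>p. {fst p, fst (snd p), snd (snd p)}"])
    show "finite P" unfolding P_def by auto
    show "finite Tr" unfolding Tr_def by (rule finite_subset[of _ "Pow {0..<n}"]) auto
    show "(\<lambda>p. {fst p, fst (snd p), snd (snd p)}) ` P \<subseteq> Tr"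
    proof clarify
      fix i j k assume "(i, j, k) \<in> P"
      hence h: "i < n" "j < n" "k < n" "{i, j} \<in> E" "{i, k} \<in> E" "{j, k} \<in> E" unfolding P_def by auto
      have "i \<noteq> j" "i \<noteq> k" "j \<noteq> k" using h edge_ne by auto
      thus "{fst (i, j, k), fst (snd (i, j, k)), snd (snd (i, j, k))} \<in> Tr"
        unfolding Tr_def using h by (auto simp: insert_commute)
    qed
    fix T assume T: "T \<in> Tr"
    then obtain u v w where uvw: "T = {u, v, w}" "u \<noteq> v" "v \<noteq> w" "u \<noteq> w"
      unfolding Tr_def by (auto simp: card_3_iff)
    have lt: "u < n" "v < n" "w < n" using T uvw unfolding Tr_def by auto
    have ed: "{u, v} \<in> E" "{u, w} \<in> E" "{v, w} \<in> E" using T uvw unfolding Tr_def by auto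
    have ed': "{v, u} \<in> E" "{w, u} \<in> E" "{w, v} \<in> E" using ed by (auto simp: insert_commute)
    have "{p \<in> P. {fst p, fst (snd p), snd (snd p)} = T} =
       {(u,v,w), (u,w,v), (v,u,w), (v,w,u), (w,u,v), (w,v,u)}"
    proof (rule Set.set_eqI, rule iffI)
      fix p assume p: "p \<in> {p \<in> P. {fst p, fst (snd p), snd (snd p)} = T}"
      obtain i j k where pijk: "p = (i, j, k)" by (cases p) auto
      have h: "{i, j} \<in> E" "{i, k} \<in> E" "{j, k} \<in> E" "{i, j, k} = {u, v, w}"
        using p uvw unfolding pijk P_def by auto
      have "i \<noteq> j" "i \<noteq> k" "j \<noteq> k" using h edge_ne by auto
      moreover have "i \<in> {u, v, w}" "j \<in> {u, v, w}" "k \<in> {u, v, w}" using h(4) by blast+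
      moreover have "u \<in> {i, j, k}" "v \<in> {i, j, k}" "w \<in> {i, j, k}" using h(4) by blast+
      ultimately show "p \<in> {(u,v,w), (u,w,v), (v,u,w), (v,w,u), (w,u,v), (w,v,u)}"
        unfolding pijk by auto
    next
      fix p assume "p \<in> {(u,v,w), (u,w,v), (v,u,w), (v,w,u), (w,u,v), (w,v,u)}"
      thus "p \<in> {p \<in> P. {fst p, fst (snd p), snd (snd p)} = T}"
        unfolding P_def uvw using lt ed ed' by (auto simp: insert_commute)
    qed
    thus "card {p \<in> P. {fst p, fst (snd p), snd (snd p)} = T} = 6" using uvw by simp
  qed
  finally show ?thesis unfolding num_triangles_def Tr_def by simp
qed

end



lemma aa_sym: "aa E i j = aa E j i" by (simp add: aa_def insert_commute)
lemma aa_idem: "aa E i j * aa E i j = aa E i j" by (simp add: aa_def)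
lemma aa_01: "aa E i j = 0 \<or> aa E i j = 1" by (simp add: aa_def)
lemma aa_nonneg: "0 \<le> aa E i j" by (simp add: aa_def)

lemma adj_mult:
  assumes "v \<in> carrier_vec n" "i < n"
  shows "(adj_matrix n E *\<^sub>v v) $ i = (\<Sum>j<n. aa E i j * v $ j)"
  using assms by (simp add: adj_matrix_def aa_def scalar_prod_def lessThan_atLeast0)

lemma eig_to_fun:
  assumes "eigenvalue (adj_matrix n E) lam"
  shows "\<exists>x. (\<exists>i<n. x i \<noteq> 0) \<and> (\<forall>i<n. (\<Sum>j<n. aa E i j * x j) = lam * x i)"
proof -
  from assms obtain v where v: "v \<in> carrier_vec n" "v \<noteq> 0\<^sub>v n" "adj_matrix n E *\<^sub>v v = lam \<cdot>\<^sub>v v"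
    unfolding eigenvalue_def eigenvector_def by (auto simp: adj_matrix_def)
  have "\<exists>i<n. v $ i \<noteq> 0"
  proof (rule ccontr)
    assume "\<not> (\<exists>i<n. v $ i \<noteq> 0)"
    hence "v = 0\<^sub>v n" using v(1) by (intro eq_vecI) auto
    thus False using v(2) by simp
  qed
  moreover have "\<forall>i<n. (\<Sum>j<n. aa E i j * v $ j) = lam * v $ i"
  proof (intro allI impI)
    fix i assume i: "i < n"
    have "(\<Sum>j<n. aa E i j * v $ j) = (adj_matrix n E *\<^sub>v v) $ i" using adj_mult[OF v(1) i] by simp
    also have "\<dots> = lam * v $ i" using v(1,3) i by simp
    finally show "(\<Sum>j<n. aa E i j * v $ j) = lam * v $ i" .
  qed
  ultimately show ?thesis by blast
qed

lemma fun_to_eig: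
  assumes "\<exists>i<n. x i \<noteq> 0" "\<forall>i<n. (\<Sum>j<n. aa E i j * x j) = lam * x i"
  shows "eigenvalue (adj_matrix n E) lam"
proof -
  define v where "v = Matrix.vec n x"
  have vc: "v \<in> carrier_vec n" unfolding v_def by simp
  have "v \<noteq> 0\<^sub>v n"
  proof
    assume "v = 0\<^sub>v n"
    then have "\<forall>i<n. v $ i = 0" by simp
    thus False using assms(1) unfolding v_def by auto
  qed
  moreover have "adj_matrix n E *\<^sub>v v = lam \<cdot>\<^sub>v v"
  proof (rule eq_vecI)
    show "dim_vec (adj_matrix n E *\<^sub>v v) = dim_vec (lam \<cdot>\<^sub>v v)" using vc by (simp add: adj_matrix_def)
    fix i assume "i < dim_vec (lam \<cdot>\<^sub>v v)"
    hence i: "i < n" using vc by simp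
    have "(adj_matrix n E *\<^sub>v v) $ i = (\<Sum>j<n. aa E i j * x j)" using adj_mult[OF vc i] unfolding v_def by simp
    also have "\<dots> = (lam \<cdot>\<^sub>v v) $ i" using assms(2) i unfolding v_def by simp
    finally show "(adj_matrix n E *\<^sub>v v) $ i = (lam \<cdot>\<^sub>v v) $ i" .
  qed
  ultimately show ?thesis unfolding eigenvalue_def eigenvector_def using vc by (auto simp: adj_matrix_def)
qed

lemma quad_eig:
  assumes "\<forall>i<n. (\<Sum>j<n. aa E i j * x j) = lam * x i"
  shows "(\<Sum>i<n. \<Sum>j<n. aa E i j * x i * x j) = lam * (\<Sum>i<n. (x i)^2)"
proof -
  have "(\<Sum>i<n. \<Sum>j<n. aa E i j * x i * x j) = (\<Sum>i<n. x i * (\<Sum>j<n. aa E i j * x j))"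
    by (simp add: sum_distrib_left algebra_simps)
  also have "\<dots> = (\<Sum>i<n. lam * (x i)^2)" using assms by (intro sum.cong refl) (simp add: power2_eq_square)
  finally show ?thesis by (simp add: sum_distrib_left)
qed

lemma finite_eig: "finite {mu. eigenvalue (adj_matrix n E) mu}"
proof -
  have A: "adj_matrix n E \<in> carrier_mat n n" by (simp add: adj_matrix_def)
  have "char_poly (adj_matrix n E) \<noteq> 0" using degree_monic_char_poly[OF A] by auto
  hence "finite {mu. poly (char_poly (adj_matrix n E)) mu = 0}" by (rule poly_roots_finite)
  thus ?thesis using eigenvalue_root_char_poly[OF A] by simp
qed

lemma pos_sumsq: fixes n :: nat shows "(\<exists>i<n. x i \<noteq> 0) \<Longrightarrow> (\<Sum>i<n. (x i)^2) > (0::real)"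
proof -
  assume "\<exists>i<n. x i \<noteq> 0"
  then obtain i where i: "i < n" "x i \<noteq> 0" by blast
  have "(x i)^2 \<le> (\<Sum>i<n. (x i)^2)" by (rule member_le_sum) (use i in auto)
  moreover have "(x i)^2 > 0" using i by simp
  ultimately show ?thesis by linarith
qed

lemma min_eig_eqI:
  assumes "eigenvalue (adj_matrix n E) mu" "\<And>lam. eigenvalue (adj_matrix n E) lam \<Longrightarrow> mu \<le> lam"
  shows "min_eigenvalue n E = mu"
  unfolding min_eigenvalue_def using assms finite_eig by (intro Min_eqI) auto

locale gr =
  fixes n :: nat and E :: "nat set set"
  assumes sg: "simple_graph n E" and m1: "card E \<ge> 1"
begin

lemma npos: "0 < n"
proof -
  have "E \<noteq> {}" using m1 by auto
  then obtain e where e: "e \<in> E" by auto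
  then obtain u v where "e = {u, v}" using sg unfolding simple_graph_def by (auto simp: card_2_iff)
  thus ?thesis using edge_lt[OF sg] e by fastforce
qed

sublocale symA n "aa E"
  by unfold_locales (auto simp: aa_sym aa_idem npos)

lemma aa_diag: "aa E i i = 0" using edge_ne[OF sg, of i i] by (auto simp: aa_def)

lemma spectral:
  "eigenvalue (adj_matrix n E) (min_eigenvalue n E) \<and>
   (\<forall>x. Qb (min_eigenvalue n E) x \<ge> 0)"
proof -
  define Q where "Q = (\<lambda>x::nat\<Rightarrow>real. (\<Sum>i<n. \<Sum>j<n. aa E i j * x i * x j))"
  define N where "N = (\<lambda>x::nat\<Rightarrow>real. (\<Sum>i<n. (x i)^2))"
  obtain v where v: "N v = 1" "\<And>x. N x = 1 \<Longrightarrow> Q v \<le> Q x"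
    using rayleigh_min[OF npos, of "aa E"] unfolding Q_def N_def by blast
  define mu where "mu = Q v"
  have psd: "mu * N x \<le> Q x" for x
  proof (cases "N x = 0")
    case True
    hence "\<forall>i\<in>{..<n}. (x i)^2 = 0" unfolding N_def by (subst sum_nonneg_eq_0_iff[symmetric]) auto
    hence "Q x = 0" unfolding Q_def by simp
    thus ?thesis using True by simp
  next
    case False
    have Np: "N x > 0" using False unfolding N_def by (metis (no_types, lifting) less_eq_real_def sum_nonneg zero_le_power2)
    define c where "c = 1 / sqrt (N x)"
    have c2: "c^2 * N x = 1" unfolding c_def using Np by (simp add: power_divide)
    have "N (\<lambda>i. c * x i) = c^2 * N x" unfolding N_def by (simp add: power_mult_distrib sum_distrib_left)
    hence "Q v \<le> Q (\<lambda>i. c * x i)" using v(2) c2 by simp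
    also have "Q (\<lambda>i. c * x i) = c^2 * Q x" unfolding Q_def
      by (simp add: sum_distrib_left power2_eq_square algebra_simps)
    finally have "mu \<le> c^2 * Q x" unfolding mu_def .
    hence "mu * N x \<le> c^2 * Q x * N x" using Np by (simp add: mult_right_mono)
    also have "\<dots> = Q x" using c2 by (simp add: algebra_simps)
    finally show ?thesis .
  qed
  have Qbnn: "Qb mu x \<ge> 0" for x using psd[of x] unfolding L1 Q_def N_def by simp
  have "Qb mu v = 0" using v(1) unfolding L1 mu_def Q_def N_def by simp
  have ker: "(\<Sum>j<n. (aa E i j - (if i = j then mu else 0)) * v j) = 0" if i: "i < n" for i
    by (rule psd_kernel[where n = n and v = v and b = "\<lambda>i j. aa E i j - (if i = j then mu else 0)"])
       (use \<open>Qb mu v = 0\<close> Qbnn i in \<open>auto simp: Qb_def aa_sym\<close>)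
  have eqv: "\<forall>i<n. (\<Sum>j<n. aa E i j * v j) = mu * v i"
  proof (intro allI impI)
    fix i assume i: "i < n"
    have "(\<Sum>j<n. (aa E i j - (if i = j then mu else 0)) * v j) = (\<Sum>j<n. aa E i j * v j) - (\<Sum>j<n. (if i = j then mu * v j else 0))"
      unfolding sum_subtractf[symmetric] by (intro sum.cong refl) (auto simp: algebra_simps)
    hence "0 = (\<Sum>j<n. aa E i j * v j) - (\<Sum>j<n. (if i = j then mu * v j else 0))"
      using ker[OF i] by simp
    thus "(\<Sum>j<n. aa E i j * v j) = mu * v i" using i by simp
  qed
  have "\<exists>i<n. v i \<noteq> 0"
  proof (rule ccontr)
    assume "\<not> (\<exists>i<n. v i \<noteq> 0)"
    hence "N v = 0" unfolding N_def by simp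
    thus False using v(1) by simp
  qed
  hence ev: "eigenvalue (adj_matrix n E) mu" using fun_to_eig eqv by blast
  have "min_eigenvalue n E = mu"
  proof (rule min_eig_eqI[OF ev])
    fix lam assume "eigenvalue (adj_matrix n E) lam"
    from eig_to_fun[OF this] obtain x where x: "\<exists>i<n. x i \<noteq> 0" "\<forall>i<n. (\<Sum>j<n. aa E i j * x j) = lam * x i"
      by blast
    have "mu * N x \<le> lam * N x" using psd[of x] quad_eig[OF x(2)] unfolding Q_def N_def by simp
    moreover have "N x > 0" using pos_sumsq[OF x(1)] unfolding N_def .
    ultimately show "mu \<le> lam" by simp
  qed
  thus ?thesis using ev Qbnn by simp
qed

end


context gr
begin

lemma M_eq: "M = 2 * real (card E)"
  unfolding M_def d_def using comb1[OF sg] by simp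

lemma T3_eq: "T3 = 6 * real (num_triangles n E)"
  unfolding T3_def using comb2[OF sg] by simp

lemma M_pos: "M > 0" using M_eq m1 by simp

lemma d_le: "i < n \<Longrightarrow> d i \<le> real n - 1"
proof -
  assume i: "i < n"
  have "d i \<le> (\<Sum>j<n. 1 - (if j = i then 1 else 0))"
    unfolding d_def by (intro sum_mono) (use aa_diag[of i] in \<open>auto simp: aa_def\<close>)
  also have "\<dots> = real n - 1" using i by (simp add: sum_subtractf)
  finally show ?thesis .
qed

lemma M_lt: "M < (real n)^2"
proof -
  have "M \<le> (\<Sum>i<n. real n - 1)" unfolding M_def by (intro sum_mono d_le) auto
  also have "\<dots> = real n * (real n - 1)" by simp
  also have "\<dots> < (real n)^2" using npos by (simp add: power2_eq_square algebra_simps)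
  finally show ?thesis .
qed

lemma Qb_alt: "Qb mu x = (\<Sum>i<n. x i * (\<Sum>k<n. (aa E i k - (if i = k then mu else 0)) * x k))"
  unfolding Qb_def by (simp add: sum_distrib_left algebra_simps)

lemma ker_expand:
  assumes dr: "\<forall>k<n. d k = r" and i: "i < n"
  shows "(\<Sum>k<n. (aa E i k - (if i = k then mu else 0)) * y j k) =
         (\<Sum>k<n. aa E i k * aa E k j) - r * r / n - mu * (aa E i j - r / n)"
proof -
  have "(\<Sum>k<n. (aa E i k - (if i = k then mu else 0)) * y j k) =
     (\<Sum>k<n. aa E i k * aa E k j) - (\<Sum>k<n. aa E i k * r / n) - (\<Sum>k<n. if i = k then mu * y j k else 0)"
    unfolding sum_subtractf[symmetric] using dr
    by (intro sum.cong refl) (auto simp: y_def algebra_simps)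
  also have "(\<Sum>k<n. aa E i k * r / n) = r * r / n"
    using dr i unfolding sum_divide_distrib[symmetric] sum_distrib_right[symmetric] d_def[symmetric] by simp
  also have "(\<Sum>k<n. if i = k then mu * y j k else 0) = mu * (aa E i j - r / n)"
    using i dr by (simp add: y_def)
  finally show ?thesis .
qed

lemma structure_rcm:
  assumes dr: "\<forall>i<n. d i = r" and rpos: "r > 0"
    and nonadj: "\<forall>i<n. \<forall>j<n. aa E i j = 0 \<longrightarrow> (\<forall>k<n. aa E i k = aa E j k)"
  shows "regular_complete_multipartite n E"
proof -
  define cl where "cl i = {k. k < n \<and> aa E i k = 0}" for i
  have fin_cl: "finite (cl i)" for i unfolding cl_def by auto
  have cl_card: "real (card (cl i)) = real n - r" if i: "i < n" for i
  proof -
    have "cl i = {k \<in> {..<n}. aa E i k = 0}" unfolding cl_def by auto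
    hence "real (card (cl i)) = (\<Sum>k<n. if aa E i k = 0 then 1 else 0)"
      by (simp add: sum_indicator_card)
    also have "\<dots> = (\<Sum>k<n. 1 - aa E i k)"
      by (intro sum.cong refl) (use aa_01[of E i] in \<open>auto\<close>)
    also have "\<dots> = real n - d i" unfolding d_def by (simp add: sum_subtractf)
    finally show ?thesis using dr i by simp
  qed
  have cl_self: "i \<in> cl i" if "i < n" for i using that aa_diag unfolding cl_def by simp
  have cl_iff: "cl i = cl j \<longleftrightarrow> aa E i j = 0" if ij: "i < n" "j < n" for i j
  proof
    assume "cl i = cl j"
    thus "aa E i j = 0" using cl_self[OF ij(2)] unfolding cl_def by auto
  next
    assume "aa E i j = 0"
    hence "\<forall>k<n. aa E i k = aa E j k" using nonadj ij by blast
    thus "cl i = cl j" unfolding cl_def by auto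
  qed
  define s where "s = card (cl 0)"
  have card_cl: "card (cl i) = s" if "i < n" for i
    using cl_card[OF that] cl_card[OF npos] unfolding s_def by simp
  have s1: "s \<ge> 1" using card_cl[OF npos] cl_self[OF npos] fin_cl[of 0]
    by (metis One_nat_def Suc_leI card_gt_0_iff empty_iff)
  have slt: "s < n" using cl_card[OF npos] rpos unfolding s_def by simp
  define rep where "rep i = Min (cl i)" for i
  have rep_in: "rep i \<in> cl i" if "i < n" for i
    unfolding rep_def using fin_cl cl_self[OF that] by (intro Min_in) auto
  have rep_lt: "rep i < n" if "i < n" for i using rep_in[OF that] unfolding cl_def by auto
  have rep_iff: "rep i = rep j \<longleftrightarrow> cl i = cl j" if ij: "i < n" "j < n" for i j
  proof
    assume h: "rep i = rep j"
    have "cl i = cl (rep i)" using rep_in[OF ij(1)] cl_iff[OF ij(1) rep_lt[OF ij(1)]] unfolding cl_def by auto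
    moreover have "cl j = cl (rep j)" using rep_in[OF ij(2)] cl_iff[OF ij(2) rep_lt[OF ij(2)]] unfolding cl_def by auto
    ultimately show "cl i = cl j" using h by simp
  next
    assume "cl i = cl j" thus "rep i = rep j" unfolding rep_def by simp
  qed
  define R where "R = rep ` {..<n}"
  define L where "L = sorted_list_of_set R"
  define k where "k = length L"
  have finR: "finite R" unfolding R_def by simp
  have setL: "set L = R" and distL: "distinct L" unfolding L_def using finR by auto
  have bij: "bij_betw ((!) L) {..<k} R" unfolding k_def by (rule bij_betw_nth) (use setL distL in auto)
  have surj: "(!) L ` {..<k} = R" using bij by (rule bij_betw_imp_surj_on)
  have inj: "inj_on ((!) L) {..<k}" using bij by (rule bij_betw_imp_inj_on)
  define c where "c x = inv_into {..<k} ((!) L) (rep x)" for x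
  have c_lt: "c x < k" if "x < n" for x
  proof -
    have "rep x \<in> (!) L ` {..<k}" using that surj unfolding R_def by auto
    hence "c x \<in> {..<k}" unfolding c_def by (rule inv_into_into)
    thus ?thesis by simp
  qed
  have c_nth: "L ! (c x) = rep x" if "x < n" for x
  proof -
    have "rep x \<in> (!) L ` {..<k}" using that surj unfolding R_def by auto
    thus ?thesis unfolding c_def by (rule f_inv_into_f)
  qed
  have c_iff: "c x = c y \<longleftrightarrow> aa E x y = 0" if xy: "x < n" "y < n" for x y
  proof -
    have "c x = c y \<longleftrightarrow> rep x = rep y"
    proof
      assume "c x = c y"
      hence "L ! (c x) = L ! (c y)" by simp
      thus "rep x = rep y" using c_nth[OF xy(1)] c_nth[OF xy(2)] by simp
    next
      assume "rep x = rep y"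
      thus "c x = c y" unfolding c_def by simp
    qed
    also have "\<dots> \<longleftrightarrow> aa E x y = 0" using rep_iff[OF xy] cl_iff[OF xy] by simp
    finally show ?thesis .
  qed
  have fiber: "card {x. x < n \<and> c x = i} = s" if i: "i < k" for i
  proof -
    have "L ! i \<in> R" using surj i by auto
    then obtain z where z: "z < n" "L ! i = rep z" unfolding R_def by auto
    have cz: "c z = i" unfolding c_def z(2)[symmetric] using inj i by (simp add: inv_into_f_f)
    have "{x. x < n \<and> c x = i} = cl z"
      unfolding cl_def cz[symmetric] using c_iff z(1) aa_sym by auto
    thus ?thesis using card_cl[OF z(1)] by simp
  qed
  have nks: "n = s * k"
  proof -
    have "card {..<n} = s * card {..<k}"
    proof (rule card_group[where g = c])
      show "c ` {..<n} \<subseteq> {..<k}" using c_lt by auto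
      fix i assume "i \<in> {..<k}"
      hence "card {x. x < n \<and> c x = i} = s" using fiber by simp
      moreover have "{x \<in> {..<n}. c x = i} = {x. x < n \<and> c x = i}" by auto
      ultimately show "card {x \<in> {..<n}. c x = i} = s" by simp
    qed auto
    thus ?thesis by simp
  qed
  have k2: "k \<ge> 2"
  proof (rule ccontr)
    assume "\<not> k \<ge> 2"
    hence "k \<le> 1" by simp
    hence "n \<le> s" using nks by (cases k) auto
    thus False using slt by simp
  qed
  have edges: "\<forall>x<n. \<forall>y<n. x \<noteq> y \<longrightarrow> ({x, y} \<in> E \<longleftrightarrow> c x \<noteq> c y)"
  proof (intro allI impI)
    fix x y assume xy: "x < n" "y < n" "x \<noteq> y"
    show "({x, y} \<in> E) = (c x \<noteq> c y)" using c_iff[OF xy(1,2)] unfolding aa_def by simp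
  qed
  have all: "k \<ge> 2 \<and> s \<ge> 1 \<and> (\<forall>x<n. c x < k) \<and> (\<forall>i<k. card {x. x < n \<and> c x = i} = s) \<and>
     (\<forall>x<n. \<forall>y<n. x \<noteq> y \<longrightarrow> ({x, y} \<in> E \<longleftrightarrow> c x \<noteq> c y))"
    using k2 s1 c_lt fiber edges by blast
  show ?thesis unfolding regular_complete_multipartite_def
    by (rule exI[of _ k], rule exI[of _ s], rule exI[of _ c], rule all)
qed

lemma eq_imp_rcm:
  assumes psd: "\<forall>x. Qb mu x \<ge> 0" and z: "T3 - mu * (M - M^2 / n^2) - M^3 / n^3 = 0"
  shows "regular_complete_multipartite n E"
proof -
  have parts: "(\<Sum>j<n. Qb mu (y j)) + Qb mu e / n + (2 * M / n^2) * (\<Sum>i<n. (e i)^2) = 0"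
    using main_identity[of mu] z by simp
  have nn1: "(\<Sum>j<n. Qb mu (y j)) \<ge> 0" by (intro sum_nonneg) (use psd in auto)
  have nn2: "Qb mu e / n \<ge> 0" using psd by simp
  have nn3: "(\<Sum>i<n. (e i)^2) \<ge> 0" by (intro sum_nonneg) auto
  have c3: "2 * M / n^2 > 0" using M_pos npos by simp
  have nn3': "(2 * M / n^2) * (\<Sum>i<n. (e i)^2) \<ge> 0" using c3 nn3 by (intro mult_nonneg_nonneg) auto
  have S1z: "(\<Sum>j<n. Qb mu (y j)) = 0" using parts nn1 nn2 nn3' by linarith
  have "(2 * M / n^2) * (\<Sum>i<n. (e i)^2) = 0" using parts nn1 nn2 nn3' by linarith
  hence ez: "(\<Sum>i<n. (e i)^2) = 0" using M_pos npos by simp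
  define r where "r = M / n"
  have dr: "\<forall>i<n. d i = r"
  proof (intro allI impI)
    fix i assume i: "i < n"
    have "\<forall>i\<in>{..<n}. (e i)^2 = 0" using ez by (subst sum_nonneg_eq_0_iff[symmetric]) auto
    hence "e i = 0" using i by simp
    thus "d i = r" unfolding e_def r_def by simp
  qed
  have rpos: "r > 0" unfolding r_def using M_pos npos by simp
  have Qy0: "Qb mu (y j) = 0" if "j < n" for j
    using S1z psd that by (subst (asm) sum_nonneg_eq_0_iff) auto
  have ker: "(\<Sum>k<n. (aa E i k - (if i = k then mu else 0)) * y j k) = 0" if ij: "i < n" "j < n" for i j
    by (rule psd_kernel[where n = n and v = "y j" and b = "\<lambda>i k. aa E i k - (if i = k then mu else 0)"])
       (use Qy0[OF ij(2)] psd ij in \<open>auto simp: Qb_def aa_sym\<close>)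
  define A2 where "A2 i j = (\<Sum>k<n. aa E i k * aa E k j)" for i j
  have A2eq: "A2 i j = mu * aa E i j + r * (r - mu) / n" if ij: "i < n" "j < n" for i j
  proof -
    have "0 = A2 i j - r * r / n - mu * (aa E i j - r / n)"
      using ker[OF ij] ker_expand[OF dr ij(1), of mu j] unfolding A2_def by simp
    moreover have "r * (r - mu) / n = r * r / n - mu * r / n" by (simp add: right_diff_distrib diff_divide_distrib)
    moreover have "mu * (aa E i j - r / n) = mu * aa E i j - mu * r / n" by (simp add: right_diff_distrib)
    ultimately show ?thesis by linarith
  qed
  have A2diag: "A2 i i = r" if i: "i < n" for i
  proof -
    have "A2 i i = d i" unfolding A2_def d_def by (intro sum.cong refl) (metis aa_idem aa_sym)
    thus ?thesis using dr i by simp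
  qed
  have rmu: "r - mu = n"
  proof -
    have "r = r * (r - mu) / n" using A2eq[OF npos npos] A2diag[OF npos] aa_diag by simp
    hence "r * n = r * (r - mu)" using npos by (simp add: field_simps)
    thus ?thesis using rpos by simp
  qed
  have nonadj: "\<forall>i<n. \<forall>j<n. aa E i j = 0 \<longrightarrow> (\<forall>k<n. aa E i k = aa E j k)"
  proof (intro allI impI)
    fix i j l assume ij: "i < n" "j < n" and a0: "aa E i j = 0" and l: "l < n"
    have A2r: "A2 i j = r" using A2eq[OF ij] a0 rmu npos by simp
    have "(\<Sum>k<n. aa E i k * (1 - aa E k j)) = d i - A2 i j"
      unfolding d_def A2_def by (simp add: sum_subtractf algebra_simps)
    hence s1: "(\<Sum>k<n. aa E i k * (1 - aa E k j)) = 0" using A2r dr ij by simp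
    have "(\<Sum>k<n. (1 - aa E i k) * aa E k j) = d j - A2 i j"
      unfolding d_def A2_def by (simp add: sum_subtractf algebra_simps aa_sym[of E _ j])
    hence s2: "(\<Sum>k<n. (1 - aa E i k) * aa E k j) = 0" using A2r dr ij by simp
    have nn: "0 \<le> aa E i k * (1 - aa E k j)" "0 \<le> (1 - aa E i k) * aa E k j" for k
      using aa_01[of E i k] aa_01[of E k j] by auto
    have t1: "aa E i l * (1 - aa E l j) = 0" using s1 nn l by (subst (asm) sum_nonneg_eq_0_iff) auto
    have t2: "(1 - aa E i l) * aa E l j = 0" using s2 nn l by (subst (asm) sum_nonneg_eq_0_iff) auto
    show "aa E i l = aa E j l" using t1 t2 aa_01[of E i l] aa_01[of E l j] aa_sym[of E l j] by auto
  qed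
  show ?thesis by (rule structure_rcm[OF dr rpos nonadj])
qed

end


context gr
begin

lemma rcm_imp:
  assumes "regular_complete_multipartite n E"
  shows "T3 - min_eigenvalue n E * (M - M^2 / n^2) - M^3 / n^3 = 0"
proof -
  obtain k s :: nat and c :: "nat \<Rightarrow> nat" where H: "k \<ge> 2 \<and> s \<ge> 1 \<and> (\<forall>x<n. c x < k) \<and>
        (\<forall>i<k. card {x. x < n \<and> c x = i} = s) \<and>
        (\<forall>x<n. \<forall>y<n. x \<noteq> y \<longrightarrow> ({x, y} \<in> E \<longleftrightarrow> c x \<noteq> c y))"
  proof -
    have ex: "\<exists>(k::nat) (s::nat) (c::nat\<Rightarrow>nat). k \<ge> 2 \<and> s \<ge> 1 \<and> (\<forall>x<n. c x < k) \<and>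
        (\<forall>i<k. card {x. x < n \<and> c x = i} = s) \<and>
        (\<forall>x<n. \<forall>y<n. x \<noteq> y \<longrightarrow> ({x, y} \<in> E \<longleftrightarrow> c x \<noteq> c y))"
      using assms unfolding regular_complete_multipartite_def .
    from ex obtain k :: nat where "\<exists>(s::nat) (c::nat\<Rightarrow>nat). k \<ge> 2 \<and> s \<ge> 1 \<and> (\<forall>x<n. c x < k) \<and>
        (\<forall>i<k. card {x. x < n \<and> c x = i} = s) \<and>
        (\<forall>x<n. \<forall>y<n. x \<noteq> y \<longrightarrow> ({x, y} \<in> E \<longleftrightarrow> c x \<noteq> c y))" ..
    then obtain s :: nat where "\<exists>c::nat\<Rightarrow>nat. k \<ge> 2 \<and> s \<ge> 1 \<and> (\<forall>x<n. c x < k) \<and>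
        (\<forall>i<k. card {x. x < n \<and> c x = i} = s) \<and>
        (\<forall>x<n. \<forall>y<n. x \<noteq> y \<longrightarrow> ({x, y} \<in> E \<longleftrightarrow> c x \<noteq> c y))" ..
    then obtain c :: "nat \<Rightarrow> nat" where "k \<ge> 2 \<and> s \<ge> 1 \<and> (\<forall>x<n. c x < k) \<and>
        (\<forall>i<k. card {x. x < n \<and> c x = i} = s) \<and>
        (\<forall>x<n. \<forall>y<n. x \<noteq> y \<longrightarrow> ({x, y} \<in> E \<longleftrightarrow> c x \<noteq> c y))" ..
    thus ?thesis by (rule that)
  qed
  note k2 = H[THEN conjunct1]
  note s1 = H[THEN conjunct2, THEN conjunct1]
  note clt = H[THEN conjunct2, THEN conjunct2, THEN conjunct1]
  note fib = H[THEN conjunct2, THEN conjunct2, THEN conjunct2, THEN conjunct1]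
  note ed = H[THEN conjunct2, THEN conjunct2, THEN conjunct2, THEN conjunct2]
  define r where "r = real n - real s"
  have aa_c: "aa E i j = (if c i = c j then 0 else 1)" if ij: "i < n" "j < n" for i j
  proof (cases "i = j")
    case True thus ?thesis using aa_diag by simp
  next
    case False thus ?thesis using ed ij unfolding aa_def by auto
  qed
  define ind where "ind i l = (if c l = c i then 1 else (0::real))" for i l
  have fibset: "{l \<in> {..<n}. c l = c i} = {x. x < n \<and> c x = c i}" for i by auto
  have sum_ind: "(\<Sum>l<n. ind i l) = real s" if i: "i < n" for i
  proof -
    have "(\<Sum>l<n. ind i l) = real (card {l \<in> {..<n}. c l = c i})"
      unfolding ind_def by (rule sum_indicator_card) simp
    thus ?thesis unfolding fibset using fib clt i by simp
  qed
  have s_le: "real s \<le> real n"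
  proof -
    have "card {x. x < n \<and> c x = c 0} \<le> card {..<n}" by (rule card_mono) auto
    thus ?thesis using fib clt npos by simp
  qed
  have r_nn: "r \<ge> 0" unfolding r_def using s_le by simp
  have aa_ind: "aa E i l = 1 - ind i l" if "i < n" "l < n" for i l
    using aa_c[OF that] unfolding ind_def by auto
  have dr: "\<forall>i<n. d i = r"
  proof (intro allI impI)
    fix i assume i: "i < n"
    have "d i = (\<Sum>l<n. 1 - ind i l)" unfolding d_def by (intro sum.cong refl) (simp add: aa_ind i)
    also have "\<dots> = r" using sum_ind[OF i] unfolding r_def by (simp add: sum_subtractf)
    finally show "d i = r" .
  qed
  have A2: "(\<Sum>l<n. aa E i l * aa E l j) = - real s * aa E i j + r" if ij: "i < n" "j < n" for i j
  proof -
    have "(\<Sum>l<n. aa E i l * aa E l j) = (\<Sum>l<n. (1 - ind i l) * (1 - ind j l))"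
      using ij by (intro sum.cong refl) (simp add: aa_ind aa_sym[of E _ j])
    also have "\<dots> = real n - (\<Sum>l<n. ind i l) - (\<Sum>l<n. ind j l) + (\<Sum>l<n. ind i l * ind j l)"
      by (simp add: algebra_simps sum_subtractf sum.distrib)
    also have "(\<Sum>l<n. ind i l * ind j l) = (if c i = c j then real s else 0)"
    proof (cases "c i = c j")
      case True
      hence "(\<Sum>l<n. ind i l * ind j l) = (\<Sum>l<n. ind i l)"
        unfolding ind_def by (intro sum.cong refl) auto
      thus ?thesis using True sum_ind[OF ij(1)] by simp
    next
      case False
      hence "(\<Sum>l<n. ind i l * ind j l) = 0"
        unfolding ind_def by (intro sum.neutral) auto
      thus ?thesis using False by simp
    qed
    finally show ?thesis using sum_ind[OF ij(1)] sum_ind[OF ij(2)] aa_c[OF ij] unfolding r_def by auto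
  qed
  have "\<exists>i0<n. c i0 = 0"
  proof -
    have "card {x. x < n \<and> c x = 0} = s" using fib k2 by auto
    hence "card {x. x < n \<and> c x = 0} > 0" using s1 by simp
    hence "{x. x < n \<and> c x = 0} \<noteq> {}" by (metis card.empty less_irrefl)
    thus ?thesis by auto
  qed
  then obtain i0 where i0: "i0 < n" "c i0 = 0" by blast
  have "\<exists>j0<n. c j0 = 1"
  proof -
    have "card {x. x < n \<and> c x = 1} = s" using fib k2 by auto
    hence "card {x. x < n \<and> c x = 1} > 0" using s1 by simp
    hence "{x. x < n \<and> c x = 1} \<noteq> {}" by (metis card.empty less_irrefl)
    thus ?thesis by auto
  qed
  then obtain j0 where j0: "j0 < n" "c j0 = 1" by blast
  define z where "z l = aa E l i0 - aa E l j0" for l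
  have z_ne: "\<exists>i<n. z i \<noteq> 0"
    using j0 i0 aa_c[OF j0(1) i0(1)] aa_diag[of j0] unfolding z_def by (intro exI[of _ j0]) auto
  have z_eig: "\<forall>i<n. (\<Sum>j<n. aa E i j * z j) = - real s * z i"
  proof (intro allI impI)
    fix i assume i: "i < n"
    have "(\<Sum>j<n. aa E i j * z j) = (\<Sum>l<n. aa E i l * aa E l i0) - (\<Sum>l<n. aa E i l * aa E l j0)"
      unfolding z_def by (simp add: sum_subtractf algebra_simps)
    also have "\<dots> = - real s * z i" unfolding A2[OF i i0(1)] A2[OF i j0(1)] z_def
      by (simp add: aa_sym algebra_simps)
    finally show "(\<Sum>j<n. aa E i j * z j) = - real s * z i" .
  qed
  have ev: "eigenvalue (adj_matrix n E) (- real s)" by (rule fun_to_eig[OF z_ne z_eig])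
  have mineq: "min_eigenvalue n E = - real s"
  proof (rule min_eig_eqI[OF ev])
    fix lam assume "eigenvalue (adj_matrix n E) lam"
    from eig_to_fun[OF this] obtain x where x: "\<exists>i<n. x i \<noteq> 0"
      "\<forall>i<n. (\<Sum>j<n. aa E i j * x j) = lam * x i" by blast
    define sg where "sg = (\<Sum>l<n. x l)"
    have "(\<Sum>i<n. \<Sum>l<n. aa E i l * x l) = (\<Sum>l<n. (\<Sum>i<n. aa E i l) * x l)"
      by (subst sum.swap) (simp add: sum_distrib_right)
    also have "\<dots> = (\<Sum>l<n. r * x l)"
    proof (intro sum.cong refl)
      fix l assume "l \<in> {..<n}"
      hence "(\<Sum>i<n. aa E i l) = d l" unfolding d_def by (simp add: aa_sym)
      thus "(\<Sum>i<n. aa E i l) * x l = r * x l" using dr \<open>l \<in> {..<n}\<close> by simp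
    qed
    finally have h1: "(\<Sum>i<n. \<Sum>l<n. aa E i l * x l) = r * sg" unfolding sg_def by (simp add: sum_distrib_left)
    have h2: "(\<Sum>i<n. \<Sum>l<n. aa E i l * x l) = lam * sg" unfolding sg_def sum_distrib_left
      using x(2) by simp
    show "- real s \<le> lam"
    proof (cases "sg = 0")
      case False
      hence "lam = r" using h1 h2 by simp
      thus ?thesis using r_nn by simp
    next
      case True
      obtain i where i: "i < n" "x i \<noteq> 0" using x(1) by blast
      have "(\<Sum>l<n. aa E i l * (\<Sum>m<n. aa E l m * x m)) = (\<Sum>l<n. aa E i l * (lam * x l))"
        using x(2) by (intro sum.cong refl) simp
      also have "\<dots> = lam * (lam * x i)" using x(2) i
        by (simp add: sum_distrib_left[symmetric] algebra_simps)
      finally have e1: "(\<Sum>l<n. aa E i l * (\<Sum>m<n. aa E l m * x m)) = lam * (lam * x i)" .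
      have "(\<Sum>l<n. aa E i l * (\<Sum>m<n. aa E l m * x m)) = (\<Sum>m<n. (\<Sum>l<n. aa E i l * aa E l m) * x m)"
        by (simp add: sum_distrib_left sum_distrib_right algebra_simps) (rule sum.swap)
      also have "\<dots> = (\<Sum>m<n. (- real s * aa E i m + r) * x m)"
        using A2 i by (intro sum.cong refl) simp
      also have "\<dots> = (\<Sum>m<n. r * x m - real s * (aa E i m * x m))"
        by (intro sum.cong refl) (simp add: algebra_simps)
      also have "\<dots> = r * sg - real s * (\<Sum>m<n. aa E i m * x m)"
        unfolding sg_def sum_subtractf sum_distrib_left ..
      also have "\<dots> = - real s * (\<Sum>m<n. aa E i m * x m) + r * sg" by simp
      also have "\<dots> = - real s * (lam * x i)" using True x(2) i by simp
      finally have "lam * (lam * x i) = - real s * (lam * x i)" using e1 by simp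
      hence "lam * lam = - real s * lam" using i(2) by (metis mult.assoc mult_right_cancel)
      hence "lam * (lam + real s) = 0" by (simp add: algebra_simps)
      hence "lam = 0 \<or> lam = - real s" by (simp add: add_eq_0_iff) linarith
      thus ?thesis by auto
    qed
  qed
  have Mn: "M / n = r"
  proof -
    have "M = (\<Sum>i<n. r)" unfolding M_def using dr by (intro sum.cong refl) simp
    thus ?thesis using npos by simp
  qed
  have e0: "e i = 0" if "i < n" for i unfolding e_def using dr that Mn by simp
  have E1: "(\<Sum>i<n. (e i)^2) = 0" using e0 by simp
  have E2: "Qb mu e = 0" for mu unfolding Qb_def using e0 by simp
  have E3: "Qb (- real s) (y j) = 0" if j: "j < n" for j
  proof -
    have "(\<Sum>k<n. (aa E i k - (if i = k then - real s else 0)) * y j k) = 0" if i: "i < n" for i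
    proof -
      have rs: "r + real s = n" unfolding r_def by simp
      have "(\<Sum>k<n. (aa E i k - (if i = k then - real s else 0)) * y j k) =
         (- real s * aa E i j + r) - r * r / n - (- real s) * (aa E i j - r / n)"
        using ker_expand[OF dr i, of "- real s" j] A2[OF i j] by simp
      also have "\<dots> = r - r * (r + real s) / n" by (simp add: algebra_simps add_divide_distrib diff_divide_distrib)
      also have "\<dots> = 0" unfolding rs using npos by simp
      finally show ?thesis .
    qed
    thus ?thesis unfolding Qb_alt by simp
  qed
  have "(\<Sum>j<n. Qb (- real s) (y j)) = 0" using E3 by simp
  hence "T3 - (- real s) * (M - M^2 / n^2) - M^3 / n^3 = 0"
    using main_identity[of "- real s"] E1 E2 by simp
  thus ?thesis unfolding mineq .
qed

end

theorem theorem3: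
  fixes n :: nat and Eg :: "nat set set"
  assumes "simple_graph n Eg" and "card Eg \<ge> 1"
  shows "min_eigenvalue n Eg \<le>
           (3 * real n ^ 3 * real (num_triangles n Eg) - 4 * real (card Eg) ^ 3)
           / (real n * real (card Eg) * (real n ^ 2 - 2 * real (card Eg)))
    \<and> (min_eigenvalue n Eg =
           (3 * real n ^ 3 * real (num_triangles n Eg) - 4 * real (card Eg) ^ 3)
           / (real n * real (card Eg) * (real n ^ 2 - 2 * real (card Eg)))
       \<longleftrightarrow> regular_complete_multipartite n Eg)"
proof -
  interpret G: gr n Eg using assms by unfold_locales
  define m where "m = real (card Eg)"
  define t where "t = real (num_triangles n Eg)"
  define mu where "mu = min_eigenvalue n Eg"
  define F where "F = (3 * real n ^ 3 * t - 4 * m ^ 3) / (real n * m * (real n ^ 2 - 2 * m))"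
  have M: "G.M = 2 * m" unfolding m_def by (rule G.M_eq)
  have T: "G.T3 = 6 * t" unfolding t_def by (rule G.T3_eq)
  have np: "real n > 0" using G.npos by simp
  have mp: "m > 0" unfolding m_def using assms(2) by simp
  have Mlt: "2 * m < (real n)^2" using G.M_lt M by simp
  define K where "K = 2 * m * ((real n)^2 - 2 * m) / (real n)^2"
  have Kp: "K > 0" unfolding K_def using mp Mlt np by simp
  have key: "G.T3 - mu * (G.M - G.M^2 / n^2) - G.M^3 / n^3 = K * (F - mu)"
  proof -
    have n0: "real n \<noteq> 0" and m0: "m \<noteq> 0" and d0: "(real n)^2 - 2 * m \<noteq> 0" using np mp Mlt by auto
    show ?thesis unfolding M T K_def F_def using n0 m0 d0
      by (simp add: field_simps power2_eq_square power3_eq_cube)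
  qed
  have spec: "\<forall>x. G.Qb mu x \<ge> 0" using G.spectral unfolding mu_def by blast
  have LHSnn: "G.T3 - mu * (G.M - G.M^2 / n^2) - G.M^3 / n^3 \<ge> 0"
  proof -
    have "(\<Sum>j<n. G.Qb mu (G.y j)) \<ge> 0" by (intro sum_nonneg) (use spec in auto)
    moreover have "G.Qb mu G.e / n \<ge> 0" using spec by simp
    moreover have "(2 * G.M / n^2) * (\<Sum>i<n. (G.e i)^2) \<ge> 0"
      using G.M_pos by (intro mult_nonneg_nonneg sum_nonneg) auto
    ultimately show ?thesis unfolding G.main_identity by linarith
  qed
  have le: "mu \<le> F"
  proof -
    have "K * (F - mu) \<ge> 0" using LHSnn key by simp
    hence "F - mu \<ge> 0" using Kp by (simp add: zero_le_mult_iff)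
    thus ?thesis by simp
  qed
  have iff: "mu = F \<longleftrightarrow> regular_complete_multipartite n Eg"
  proof
    assume "mu = F"
    hence "G.T3 - mu * (G.M - G.M^2 / n^2) - G.M^3 / n^3 = 0" using key by simp
    thus "regular_complete_multipartite n Eg" by (rule G.eq_imp_rcm[OF spec])
  next
    assume "regular_complete_multipartite n Eg"
    hence "G.T3 - mu * (G.M - G.M^2 / n^2) - G.M^3 / n^3 = 0" unfolding mu_def by (rule G.rcm_imp)
    hence "K * (F - mu) = 0" using key by simp
    thus "mu = F" using Kp by simp
  qed
  show ?thesis using le iff unfolding mu_def F_def m_def t_def by simp
qed


end
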